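(* Consider an insertion-only edge stream and the reservoir sample $\mathcal{S}$ of capacity $M\ge 6$ (as described in the context). Let $\lambda=\{\ell_1,\ell_2,\ell_3\}$ and $\gamma=\{g_1,g_2,g_3\}$ be two triangles sharing no edge, where the edges of each are numbered in their order of arrival on the stream, and assume the last edge of $\lambda$ arrives on the stream before the last edge of $\gamma$, i.e. $t_\lambda<t_\gamma$. Let $D_\lambda$ be the event that $\ell_1$ and $\ell_2$ are both in $\mathcal{S}$ at the end of time step $t_\lambda-1$, and $D_\gamma$ the event that $g_1$ and $g_2$ are both in $\mathcal{S}$ at the end of time step $t_\gamma-1$. Then \[ \Pr(D_\gamma\mid D_\lambda)\le\Pr(D_\gamma). \]
   Context: An insertion-only edge stream: at each time step $t=1,2,\dots$ an edge $e_t$ between two distinct vertices arrives, which is not already present. A triangle is a set of three edges $\{\{u,v\},\{v,w\},\{w,u\}\}$ with $u,v,w$ distinct. For a triangle $\lambda$, $t_\lambda$ is the time step at which its last edge arrives. Reservoir sampling with capacity $M$: the sample $\mathcal{S}$ starts empty; at time $t$, if $t\le M$ the edge $e_t$ is inserted; if $t>M$, with probability $M/t$ an edge chosen uniformly at random from $\mathcal{S}$ is removed and $e_t$ is inserted, otherwise $\mathcal{S}$ is unchanged. *)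

theory Defs
  imports "HOL-Probability.Probability"
begin

definition is_triangle :: "'v set set \<Rightarrow> bool" where
  "is_triangle T \<longleftrightarrow>
     (\<exists>u v w. u \<noteq> v \<and> v \<noteq> w \<and> u \<noteq> w \<and> T = {{u,v},{v,w},{w,u}})"

definition reservoir_step ::
  "nat \<Rightarrow> (nat \<Rightarrow> 'v set) \<Rightarrow> nat \<Rightarrow> 'v set set \<Rightarrow> 'v set set pmf" where
  "reservoir_step M e t S =
     (if t \<le> M then return_pmf (insert (e t) S)
      else bind_pmf (bernoulli_pmf (real M / real t))
             (\<lambda>b. if b then map_pmf (\<lambda>x. insert (e t) (S - {x})) (pmf_of_set S)
                  else return_pmf S))"

text \<open>Joint distribution of the history of the sample: the list
  [S_0, S_1, ..., S_n], where S_k is the sample at the end of time step k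
  (S_0 = {} is the initial empty sample).\<close>
fun reservoir_hist ::
  "nat \<Rightarrow> (nat \<Rightarrow> 'v set) \<Rightarrow> nat \<Rightarrow> 'v set set list pmf" where
  "reservoir_hist M e 0 = return_pmf [{}]"
| "reservoir_hist M e (Suc n) =
     bind_pmf (reservoir_hist M e n)
       (\<lambda>h. map_pmf (\<lambda>S. h @ [S]) (reservoir_step M e (Suc n) (last h)))"

end

theory Submission
  imports Defs
begin
lemma measure_bind_pmf': "measure (measure_pmf (bind_pmf p f)) A = (\<integral>x. measure (measure_pmf (f x)) A \<partial>p)"
  unfolding measure_pmf_bind
  by (subst measure_pmf.measure_bind[where N="count_space UNIV"]) (auto simp: measure_subprob)

lemma e_notin:
  fixes t :: nat
  assumes "inj_on e {1..}" "1 \<le> t" "S0 \<subseteq> e`{1..t-1}" shows "e t \<notin> S0"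
proof
  assume "e t \<in> S0"
  then obtain i where "i \<in> {1..t-1}" "e t = e i" using assms(3) by auto
  moreover have "t \<in> {1..}" "i \<in> {1..}" using assms(2) \<open>i \<in> {1..t-1}\<close> by auto
  ultimately have "t = i" using inj_onD[OF assms(1)] by blast
  moreover from \<open>i \<in> {1..t-1}\<close> have "1 \<le> i" "i \<le> t - 1" by auto
  ultimately show False by linarith
qed

lemma step_inv:
  assumes "1 \<le> t" "finite S0" "card S0 = min (t-1) M" "S0 \<subseteq> e`{1..t-1}" "M \<ge> 1"
    "inj_on e {1..}" "S \<in> set_pmf (reservoir_step M e t S0)"
  shows "finite S \<and> card S = min t M \<and> S \<subseteq> e`{1..t}"
proof -
  have nin: "e t \<notin> S0" using e_notin assms by blast
  have sub: "e`{1..t-1} \<subseteq> e`{1..t}" by auto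
  show ?thesis
  proof (cases "t \<le> M")
    case True
    then have "S = insert (e t) S0" using assms(7) by (simp add: reservoir_step_def)
    then show ?thesis using assms nin True sub by auto
  next
    case False
    then have cM: "card S0 = M" using assms by auto
    then have ne: "S0 \<noteq> {}" using assms by auto
    have p: "0 \<le> real M / real t" "real M / real t \<le> 1" using False by auto
    from assms(7) False p ne assms(2) obtain x where
      "S = S0 \<or> (x \<in> S0 \<and> S = insert (e t) (S0 - {x}))"
      by (auto simp: reservoir_step_def split: if_splits)
    then show ?thesis
    proof
      assume "S = S0" then show ?thesis using assms cM False sub by auto
    next
      assume h: "x \<in> S0 \<and> S = insert (e t) (S0 - {x})"
      then have "card S = M" using nin cM assms(2) ne
        by (simp add: card_Diff_singleton) (metis One_nat_def Suc_pred card_gt_0_iff)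
      then show ?thesis using h assms False sub by auto
    qed
  qed
qed

lemma hist_inv:
  assumes "M \<ge> 1" "inj_on e {1..}"
  shows "h \<in> set_pmf (reservoir_hist M e n) \<Longrightarrow>
    length h = Suc n \<and> finite (h!n) \<and> card (h!n) = min n M \<and> h!n \<subseteq> e`{1..n}"
proof (induction n arbitrary: h)
  case 0
  then show ?case by auto
next
  case (Suc n)
  then obtain h0 S where h0: "h0 \<in> set_pmf (reservoir_hist M e n)"
    "S \<in> set_pmf (reservoir_step M e (Suc n) (last h0))" "h = h0 @ [S]" by auto
  have I: "length h0 = Suc n" "finite (h0!n)" "card (h0!n) = min n M" "h0!n \<subseteq> e`{1..n}"
    using Suc.IH[OF h0(1)] by auto
  have l: "last h0 = h0 ! n" using I(1) by (metis diff_Suc_1 last_conv_nth list.size(3) nat.distinct(1))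
  have "finite S \<and> card S = min (Suc n) M \<and> S \<subseteq> e`{1..Suc n}"
    apply (rule step_inv)
    using I h0 l assms by auto
  then show ?case using h0(3) I(1) by (simp add: nth_append)
qed
definition fac :: "nat \<Rightarrow> (nat \<Rightarrow> 'v set) \<Rightarrow> nat \<Rightarrow> 'v set set \<Rightarrow> real" where
  "fac M e t B = (if t \<le> M then 1 else if e t \<in> B then real (M + 1 - card B) / real t
                  else real (t - card B) / real t)"

lemma step_meas:
  assumes "1 \<le> t" "finite S0" "card S0 = min (t-1) M" "e t \<notin> S0" "M \<ge> 1" "finite B"
  shows "measure (measure_pmf (reservoir_step M e t S0)) {S. B \<subseteq> S}
         = fac M e t B * (if B - {e t} \<subseteq> S0 then 1 else 0)"
proof (cases "t \<le> M")
  case True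
  have "B \<subseteq> insert (e t) S0 \<longleftrightarrow> B - {e t} \<subseteq> S0" by blast
  then show ?thesis using True by (simp add: reservoir_step_def fac_def indicator_def)
next
  case False
  then have cM: "card S0 = M" using assms by auto
  then have ne: "S0 \<noteq> {}" using assms by auto
  have p: "0 \<le> real M / real t" "real M / real t \<le> 1" using False by auto
  have t0: "real t > 0" using False by auto
  have "measure (measure_pmf (reservoir_step M e t S0)) {S. B \<subseteq> S}
     = real (card (S0 \<inter> {x. B \<subseteq> insert (e t) (S0 - {x})})) / real M * (real M / real t)
       + (if B \<subseteq> S0 then 1 else 0) * (1 - real M / real t)"
    using False p ne assms(2) cM
    by (simp add: reservoir_step_def measure_bind_pmf' measure_pmf_of_set vimage_def)
  also have "\<dots> = fac M e t B * (if B - {e t} \<subseteq> S0 then 1 else 0)"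
  proof (cases "e t \<in> B")
    case True
    let ?B = "B - {e t}"
    have cB: "card B = card ?B + 1" using True assms(6)
      by (metis Suc_eq_plus1 card_Suc_Diff1)
    have nsub: "\<not> B \<subseteq> S0" using True assms(4) by auto
    have eqs: "S0 \<inter> {x. B \<subseteq> insert (e t) (S0 - {x})} = (if ?B \<subseteq> S0 then S0 - ?B else {})"
      using True assms(4) by auto
    show ?thesis
    proof (cases "?B \<subseteq> S0")
      case T: True
      have c: "card (S0 - ?B) = M - card ?B" using T cM assms(2) by (metis card_Diff_subset finite_subset)
      have le: "card ?B \<le> M" using T cM assms(2) card_mono by metis
      have M0: "real M > 0" using assms(5) by simp
      have a: "real (card (S0 - ?B)) / real M * (real M / real t) = real (card (S0 - ?B)) / real t"
        using M0 by simp
      have b: "M + 1 - card B = card (S0 - ?B)" using c cB le by simp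
      have b': "Suc M - card B = card (S0 - ?B)" using b by simp
      show ?thesis using T nsub eqs False M0
        by (simp add: a b b' fac_def True)
    next
      case F: False
      then show ?thesis using nsub eqs by simp
    qed
  next
    case Fe: False
    have eqs: "S0 \<inter> {x. B \<subseteq> insert (e t) (S0 - {x})} = (if B \<subseteq> S0 then S0 - B else {})"
      using Fe assms(4) by auto
    show ?thesis
    proof (cases "B \<subseteq> S0")
      case T: True
      have c: "card (S0 - B) = M - card B" using T cM assms(2) by (metis card_Diff_subset finite_subset)
      have le: "card B \<le> M" using T cM assms(2) card_mono by metis
      have le2: "card B \<le> t" using le False by auto
      have "B - {e t} = B" using Fe by auto
      have M0: "real M > 0" using assms(5) by simp
      have r: "real (card (S0 - B)) = real M - real (card B)" using c le by simp
      have r2: "real (t - card B) = real t - real (card B)" using le2 by simp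
      have k: "\<And>m b t::real. m > 0 \<Longrightarrow> t > 0 \<Longrightarrow> (m - b) / m * (m / t) + (1 - m / t) = (t - b) / t"
        by (simp add: field_simps)
      have "real (card (S0 - B)) / real M * (real M / real t) + 1 * (1 - real M / real t)
            = real (t - card B) / real t" unfolding r r2 using k[OF M0 t0] by simp
      then show ?thesis using T eqs False \<open>B - {e t} = B\<close>
        by (simp add: fac_def Fe)
    next
      case F: False
      have "B - {e t} = B" using Fe by auto
      then show ?thesis using F eqs by simp
    qed
  qed
  finally show ?thesis .
qed

lemma hist_meas:
  assumes "M \<ge> 1" "inj_on e {1..}" "finite B"
  shows "measure (measure_pmf (reservoir_hist M e (Suc n))) {h. E (take (Suc n) h) \<and> B \<subseteq> h ! Suc n}
       = fac M e (Suc n) B * measure (measure_pmf (reservoir_hist M e n)) {h. E h \<and> B - {e (Suc n)} \<subseteq> h ! n}"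
proof -
  let ?H = "reservoir_hist M e n"
  have "measure (measure_pmf (reservoir_hist M e (Suc n))) {h. E (take (Suc n) h) \<and> B \<subseteq> h ! Suc n}
     = (\<integral>h0. measure (measure_pmf (reservoir_step M e (Suc n) (last h0)))
            ((\<lambda>S. h0 @ [S]) -` {h. E (take (Suc n) h) \<and> B \<subseteq> h ! Suc n}) \<partial>?H)"
    by (simp add: measure_bind_pmf')
  also have "\<dots> = (\<integral>h0. fac M e (Suc n) B * indicator {h. E h \<and> B - {e (Suc n)} \<subseteq> h ! n} h0 \<partial>?H)"
  proof (rule integral_cong_AE)
    show "AE h0 in measure_pmf ?H. measure (measure_pmf (reservoir_step M e (Suc n) (last h0)))
            ((\<lambda>S. h0 @ [S]) -` {h. E (take (Suc n) h) \<and> B \<subseteq> h ! Suc n})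
          = fac M e (Suc n) B * indicator {h. E h \<and> B - {e (Suc n)} \<subseteq> h ! n} h0"
      unfolding AE_measure_pmf_iff
    proof
      fix h0 assume h0: "h0 \<in> set_pmf ?H"
      note I = hist_inv[OF assms(1,2) h0]
      have l: "last h0 = h0 ! n" using I by (metis diff_Suc_1 last_conv_nth list.size(3) nat.distinct(1))
      have pre: "(\<lambda>S. h0 @ [S]) -` {h. E (take (Suc n) h) \<and> B \<subseteq> h ! Suc n} = {S. E h0 \<and> B \<subseteq> S}"
        using I by (auto simp: nth_append)
      have nin: "e (Suc n) \<notin> h0 ! n" using e_notin[OF assms(2), of "Suc n"] I by auto
      show "measure (measure_pmf (reservoir_step M e (Suc n) (last h0)))
            ((\<lambda>S. h0 @ [S]) -` {h. E (take (Suc n) h) \<and> B \<subseteq> h ! Suc n})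
          = fac M e (Suc n) B * indicator {h. E h \<and> B - {e (Suc n)} \<subseteq> h ! n} h0"
      proof (cases "E h0")
        case True
        then show ?thesis unfolding pre l using step_meas[of "Suc n" "h0 ! n" M e B] I nin assms
          by (auto simp: indicator_def)
      next
        case False
        then show ?thesis unfolding pre by simp
      qed
    qed
  qed auto
  also have "\<dots> = fac M e (Suc n) B * measure (measure_pmf ?H) {h. E h \<and> B - {e (Suc n)} \<subseteq> h ! n}"
    by simp
  finally show ?thesis .
qed
lemma ineq1:
  fixes t x y :: nat assumes "t > 0"
  shows "real (t - (x + y)) / real t \<le> real (t - x) / real t * (real (t - y) / real t)"
proof (cases "x + y \<le> t")
  case True
  have "real (t - (x + y)) * real t \<le> real (t - x) * real (t - y)"
    using True by (simp add: of_nat_diff algebra_simps)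
  then show ?thesis using assms by (simp add: field_simps power2_eq_square)
next
  case False
  then show ?thesis by simp
qed

lemma ineq2:
  fixes t x y M :: nat assumes "M < t"
  shows "real (M + 1 - (x + y)) / real t \<le> real (M + 1 - x) / real t * (real (t - y) / real t)"
proof (cases "x + y \<le> M + 1")
  case True
  have "real (M + 1 - (x + y)) * real t \<le> real (M + 1 - x) * real (t - y)"
  proof -
    have "real (M + 1 - x) * real y \<le> real t * real y"
      using assms by (intro mult_right_mono) auto
    then show ?thesis using True assms by (simp add: of_nat_diff algebra_simps)
  qed
  then show ?thesis using assms by (simp add: field_simps power2_eq_square)
next
  case False
  then show ?thesis by simp
qed
lemma fac_nonneg: "fac M e t B \<ge> 0"
  by (simp add: fac_def)

lemma iter:
  assumes "M \<ge> 1" "inj_on e {1..}" "s \<le> T"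
  shows "\<forall>B. finite B \<longrightarrow> (\<exists>c. \<forall>X.
     measure (measure_pmf (reservoir_hist M e T)) {h. X \<subseteq> h!s \<and> B \<subseteq> h!T}
     = c * measure (measure_pmf (reservoir_hist M e s)) {h. X \<union> (B - e`{s<..T}) \<subseteq> h!s})"
  using assms(3)
proof (induction T rule: dec_induct)
  case base
  show ?case
  proof (intro allI impI exI[of _ 1])
    fix B X
    have "{h. X \<subseteq> h!s \<and> B \<subseteq> h!s} = {h. X \<union> (B - e`{s<..s}) \<subseteq> h!s}" by auto
    then show "measure (measure_pmf (reservoir_hist M e s)) {h. X \<subseteq> h!s \<and> B \<subseteq> h!s}
     = 1 * measure (measure_pmf (reservoir_hist M e s)) {h. X \<union> (B - e`{s<..s}) \<subseteq> h!s}" by simp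
  qed
next
  case (step T)
  show ?case
  proof (intro allI impI)
    fix B :: "'a set set" assume fB: "finite B"
    obtain c where c: "\<And>X. measure (measure_pmf (reservoir_hist M e T)) {h. X \<subseteq> h!s \<and> B - {e (Suc T)} \<subseteq> h!T}
     = c * measure (measure_pmf (reservoir_hist M e s)) {h. X \<union> (B - {e (Suc T)} - e`{s<..T}) \<subseteq> h!s}"
      using step.IH fB by blast
    have bset: "B - {e (Suc T)} - e`{s<..T} = B - e`{s<..Suc T}"
    proof -
      have "{s<..Suc T} = insert (Suc T) {s<..T}" using step.hyps by auto
      then show ?thesis by auto
    qed
    show "\<exists>c. \<forall>X. measure (measure_pmf (reservoir_hist M e (Suc T))) {h. X \<subseteq> h!s \<and> B \<subseteq> h!Suc T}
     = c * measure (measure_pmf (reservoir_hist M e s)) {h. X \<union> (B - e`{s<..Suc T}) \<subseteq> h!s}"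
    proof (intro exI[of _ "fac M e (Suc T) B * c"] allI)
      fix X
      have st: "s < Suc T" using step.hyps by simp
      have "{h. X \<subseteq> h!s \<and> B \<subseteq> h!Suc T} = {h. (\<lambda>h. X \<subseteq> h!s) (take (Suc T) h) \<and> B \<subseteq> h!Suc T}"
        by (simp only: nth_take[OF st])
      then have "measure (measure_pmf (reservoir_hist M e (Suc T))) {h. X \<subseteq> h!s \<and> B \<subseteq> h!Suc T}
         = fac M e (Suc T) B * measure (measure_pmf (reservoir_hist M e T)) {h. X \<subseteq> h!s \<and> B - {e (Suc T)} \<subseteq> h ! T}"
        using hist_meas[OF assms(1,2) fB, of T "\<lambda>h. X \<subseteq> h!s"] by (simp only:)
      also have "\<dots> = fac M e (Suc T) B * (c * measure (measure_pmf (reservoir_hist M e s)) {h. X \<union> (B - {e (Suc T)} - e`{s<..T}) \<subseteq> h!s})"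
        by (simp only: c)
      also have "\<dots> = fac M e (Suc T) B * c * measure (measure_pmf (reservoir_hist M e s)) {h. X \<union> (B - e`{s<..Suc T}) \<subseteq> h!s}"
        by (simp only: bset mult.assoc)
      finally show "measure (measure_pmf (reservoir_hist M e (Suc T))) {h. X \<subseteq> h!s \<and> B \<subseteq> h!Suc T}
     = fac M e (Suc T) B * c * measure (measure_pmf (reservoir_hist M e s)) {h. X \<union> (B - e`{s<..Suc T}) \<subseteq> h!s}" .
    qed
  qed
qed

lemma submult:
  assumes "M \<ge> 1" "inj_on e {1..}"
  shows "\<forall>X Y. finite X \<longrightarrow> finite Y \<longrightarrow> X \<inter> Y = {} \<longrightarrow>
    measure (measure_pmf (reservoir_hist M e n)) {h. X \<union> Y \<subseteq> h!n}
    \<le> measure (measure_pmf (reservoir_hist M e n)) {h. X \<subseteq> h!n}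
      * measure (measure_pmf (reservoir_hist M e n)) {h. Y \<subseteq> h!n}"
proof (induction n)
  case 0
  then show ?case by (auto simp: indicator_def)
next
  case (Suc n)
  let ?p = "\<lambda>Z. measure (measure_pmf (reservoir_hist M e n)) {h. Z \<subseteq> h!n}"
  let ?q = "\<lambda>Z. measure (measure_pmf (reservoir_hist M e (Suc n))) {h. Z \<subseteq> h!Suc n}"
  let ?a = "e (Suc n)"
  have rec: "?q Z = fac M e (Suc n) Z * ?p (Z - {?a})" if "finite Z" for Z
    using hist_meas[OF assms that, of n "\<lambda>_. True"] by simp
  show ?case
  proof (intro allI impI)
    fix X Y :: "'a set set" assume fX: "finite X" and fY: "finite Y" and d: "X \<inter> Y = {}"
    have pn: "\<And>Z. ?p Z \<ge> 0" by simp
    have IH: "?p (X' \<union> Y') \<le> ?p X' * ?p Y'" if "finite X'" "finite Y'" "X' \<inter> Y' = {}" for X' Y'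
      using Suc.IH that by blast
    have cu: "card (X \<union> Y) = card X + card Y" using fX fY d card_Un_disjoint by blast
    show "?q (X \<union> Y) \<le> ?q X * ?q Y"
    proof (cases "Suc n \<le> M")
      case True
      have "?q (X \<union> Y) = ?p ((X - {?a}) \<union> (Y - {?a}))"
        using rec[of "X \<union> Y"] fX fY True by (simp add: fac_def Un_Diff)
      also have "\<dots> \<le> ?p (X - {?a}) * ?p (Y - {?a})" by (rule IH) (use fX fY d in auto)
      also have "\<dots> = ?q X * ?q Y" using rec[of X] rec[of Y] fX fY True by (simp add: fac_def)
      finally show ?thesis .
    next
      case False
      show ?thesis
      proof (cases "?a \<in> X \<or> ?a \<in> Y")
        case F: False
        have fxy: "fac M e (Suc n) (X \<union> Y) \<le> fac M e (Suc n) X * fac M e (Suc n) Y"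
          using F False ineq1[of "Suc n" "card X" "card Y"] by (simp add: fac_def cu)
        have "?q (X \<union> Y) = fac M e (Suc n) (X \<union> Y) * ?p (X \<union> Y)"
          using rec[of "X \<union> Y"] fX fY F by simp
        also have "\<dots> \<le> fac M e (Suc n) (X \<union> Y) * (?p X * ?p Y)"
          using IH[OF fX fY d] by (intro mult_left_mono fac_nonneg)
        also have "\<dots> \<le> (fac M e (Suc n) X * fac M e (Suc n) Y) * (?p X * ?p Y)"
          using fxy by (intro mult_right_mono) auto
        also have "\<dots> = ?q X * ?q Y" using rec[of X] rec[of Y] fX fY F by simp
        finally show ?thesis .
      next
        case T: True
        show ?thesis
        proof (cases "?a \<in> X")
          case aX: True
          then have aY: "?a \<notin> Y" using d by auto
          have fxy: "fac M e (Suc n) (X \<union> Y) \<le> fac M e (Suc n) X * fac M e (Suc n) Y"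
            using aX aY False ineq2[of M "Suc n" "card X" "card Y"] by (simp add: fac_def cu)
          have "?q (X \<union> Y) = fac M e (Suc n) (X \<union> Y) * ?p ((X - {?a}) \<union> Y)"
            using rec[of "X \<union> Y"] fX fY aY by (simp add: Un_Diff)
          also have "\<dots> \<le> fac M e (Suc n) (X \<union> Y) * (?p (X - {?a}) * ?p Y)"
            using IH[of "X - {?a}" Y] fX fY d by (intro mult_left_mono fac_nonneg) auto
          also have "\<dots> \<le> (fac M e (Suc n) X * fac M e (Suc n) Y) * (?p (X - {?a}) * ?p Y)"
            using fxy by (intro mult_right_mono) auto
          also have "\<dots> = ?q X * ?q Y" using rec[of X] rec[of Y] fX fY aY by simp
          finally show ?thesis .
        next
          case aX: False
          then have aY: "?a \<in> Y" using T by auto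
          have fxy: "fac M e (Suc n) (X \<union> Y) \<le> fac M e (Suc n) X * fac M e (Suc n) Y"
            using aX aY False ineq2[of M "Suc n" "card Y" "card X"] by (simp add: fac_def cu add.commute mult.commute)
          have "?q (X \<union> Y) = fac M e (Suc n) (X \<union> Y) * ?p (X \<union> (Y - {?a}))"
            using rec[of "X \<union> Y"] fX fY aX by (simp add: Un_Diff)
          also have "\<dots> \<le> fac M e (Suc n) (X \<union> Y) * (?p X * ?p (Y - {?a}))"
            using IH[of X "Y - {?a}"] fX fY d by (intro mult_left_mono fac_nonneg) auto
          also have "\<dots> \<le> (fac M e (Suc n) X * fac M e (Suc n) Y) * (?p X * ?p (Y - {?a}))"
            using fxy by (intro mult_right_mono) auto
          also have "\<dots> = ?q X * ?q Y" using rec[of X] rec[of Y] fX fY aX by simp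
          finally show ?thesis .
        qed
      qed
    qed
  qed
qed
theorem lemma4p14:
  fixes M :: nat and e :: "nat \<Rightarrow> 'v set"
    and a1 a2 a3 b1 b2 b3 :: nat
  assumes M: "M \<ge> 6"
    and edges: "\<forall>t\<ge>1. \<exists>u v. u \<noteq> v \<and> e t = {u, v}"
    and new_edges: "inj_on e {1..}"
    and a_order: "1 \<le> a1" "a1 < a2" "a2 < a3"
    and b_order: "1 \<le> b1" "b1 < b2" "b2 < b3"
    and tri_lam: "is_triangle {e a1, e a2, e a3}"
    and tri_gam: "is_triangle {e b1, e b2, e b3}"
    and no_shared: "{e a1, e a2, e a3} \<inter> {e b1, e b2, e b3} = {}"
    and last_order: "a3 < b3"
  shows "cond_prob (measure_pmf (reservoir_hist M e (b3 - 1)))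
           (\<lambda>h. e b1 \<in> h ! (b3 - 1) \<and> e b2 \<in> h ! (b3 - 1))
           (\<lambda>h. e a1 \<in> h ! (a3 - 1) \<and> e a2 \<in> h ! (a3 - 1))
         \<le> measure_pmf.prob (reservoir_hist M e (b3 - 1))
             {h. e b1 \<in> h ! (b3 - 1) \<and> e b2 \<in> h ! (b3 - 1)}"
proof -
  define s where "s = a3 - 1"
  define T where "T = b3 - 1"
  define L where "L = {e a1, e a2}"
  define G where "G = {e b1, e b2}"
  define A where "A = G - e`{s<..T}"
  have M1: "M \<ge> 1" using M by simp
  have sT: "s \<le> T" using last_order unfolding s_def T_def by simp
  let ?HT = "measure_pmf (reservoir_hist M e T)"
  let ?m = "\<lambda>Y. measure (measure_pmf (reservoir_hist M e s)) {h. Y \<subseteq> h!s}"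
  obtain c where c: "\<And>X. measure ?HT {h. X \<subseteq> h!s \<and> G \<subseteq> h!T} = c * ?m (X \<union> A)"
    using iter[OF M1 new_edges sT] unfolding A_def G_def by blast
  obtain c0 where c0: "\<And>X. measure ?HT {h. X \<subseteq> h!s \<and> {} \<subseteq> h!T} = c0 * ?m (X \<union> ({} - e`{s<..T}))"
    using iter[OF M1 new_edges sT] by blast
  have "c0 = 1" using c0[of "{}"] by simp
  then have den: "measure ?HT {h. L \<subseteq> h!s} = ?m L" using c0[of L] by simp
  have num: "measure ?HT {h. L \<subseteq> h!s \<and> G \<subseteq> h!T} = c * ?m (L \<union> A)" using c by simp
  have rhs: "measure ?HT {h. G \<subseteq> h!T} = c * ?m A" using c[of "{}"] by simp
  have LG: "L \<inter> G = {}" using no_shared unfolding L_def G_def by blast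
  have dis: "L \<inter> A = {}" using LG unfolding A_def by blast
  have fL: "finite L" unfolding L_def by simp
  have fA: "finite A" unfolding A_def G_def by simp
  have sm: "?m (L \<union> A) \<le> ?m L * ?m A"
    using spec[OF spec[OF submult[OF M1 new_edges, of s], of L], of A] fL fA dis by simp
  have mono: "?m (L \<union> A) \<le> ?m A"
    by (rule measure_pmf.finite_measure_mono) auto
  have goal: "c * ?m (L \<union> A) / ?m L \<le> c * ?m A"
  proof (cases "?m L = 0")
    case True
    then show ?thesis using rhs by (simp, metis measure_nonneg)
  next
    case False
    then have Lp: "?m L > 0" by (simp add: zero_less_measure_iff)
    show ?thesis
    proof (cases "?m A = 0")
      case True
      then have "?m (L \<union> A) = 0" using mono by (simp add: measure_le_0_iff)
      then show ?thesis using True by simp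
    next
      case False
      then have Ap: "?m A > 0" by (simp add: zero_less_measure_iff)
      have cn: "c \<ge> 0" using rhs Ap by (metis measure_nonneg zero_le_mult_iff linorder_not_le)
      have "c * ?m (L \<union> A) \<le> c * (?m L * ?m A)" by (rule mult_left_mono[OF sm cn])
      then show ?thesis using Lp by (simp add: divide_le_eq mult_ac)
    qed
  qed
  have e1: "{h. e b1 \<in> h ! T \<and> e b2 \<in> h ! T} = {h. G \<subseteq> h!T}" unfolding G_def by auto
  have e2: "{x. e b1 \<in> x ! T \<and> e b2 \<in> x ! T \<and> e a1 \<in> x ! s \<and> e a2 \<in> x ! s}
      = {h. L \<subseteq> h!s \<and> G \<subseteq> h!T}" unfolding G_def L_def by auto
  have e3: "{x. e a1 \<in> x ! s \<and> e a2 \<in> x ! s} = {h. L \<subseteq> h!s}" unfolding L_def by auto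
  show ?thesis
    unfolding s_def[symmetric] T_def[symmetric] cond_prob_def
    using goal num den rhs by (simp add: e1 e2 e3)
qed
end
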